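(* For every $p\in[1,\infty)$, the $\ell^p$ compression rate of $\mathbb Z\wr\mathbb Z$ is at least $1/3$: for every $\alpha<1/3$ there exist a measure space $(\Omega,\nu)$, a Lipschitz map $\theta\colon\mathbb Z\wr\mathbb Z\to L^p(\Omega,\nu)$ and constants $c>0$, $t_0$ such that $\|\theta(x)-\theta(y)\|_p\ge c\,d(x,y)^\alpha$ whenever $d(x,y)\ge t_0$.
   Context: The lamplighter group $\mathbb Z\wr\mathbb Z$ consists of pairs $(f,n)$ with $f\colon\mathbb Z\to\mathbb Z$ finitely supported and $n\in\mathbb Z$, with product $(f,n)(g,n')=(f+g(\cdot-n),n+n')$, equipped with the word metric $d$ for generators $(\delta_0,0)$ and $(0,1)$. The $\ell^p$ compression rate of a metric space is the supremum of $\alpha$ such that it admits a Lipschitz map into an $L^p$-space with $\|\theta(x)-\theta(y)\|_p\ge\rho_-(d(x,y))$ for some $\rho_-$ with $\rho_-(t)\ge c\,t^\alpha$ for large $t$. *)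

theory Defs
  imports "HOL-Analysis.Analysis"
begin

type_synonym lamp = "(int \<Rightarrow> int) \<times> int"

definition lamp_carrier :: "lamp set" where
  "lamp_carrier = {(f, n). finite {k. f k \<noteq> 0}}"

definition lamp_mult :: "lamp \<Rightarrow> lamp \<Rightarrow> lamp" where
  "lamp_mult x y = (\<lambda>k. fst x k + fst y (k - snd x), snd x + snd y)"

definition delta0 :: "int \<Rightarrow> int" where
  "delta0 k = (if k = 0 then 1 else 0)"

definition lamp_gens :: "lamp set" where
  "lamp_gens = {(delta0, 0), (\<lambda>k. - delta0 k, 0), (\<lambda>_. 0, 1), (\<lambda>_. 0, -1)}"

inductive lamp_path :: "lamp \<Rightarrow> nat \<Rightarrow> lamp \<Rightarrow> bool" where
  refl: "lamp_path x 0 x"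
| step: "lamp_path x k y \<Longrightarrow> s \<in> lamp_gens \<Longrightarrow> lamp_path x (Suc k) (lamp_mult y s)"

definition lamp_dist :: "lamp \<Rightarrow> lamp \<Rightarrow> nat" where
  "lamp_dist x y = (LEAST k. lamp_path x k y)"

definition in_Lp :: "'a measure \<Rightarrow> real \<Rightarrow> ('a \<Rightarrow> real) \<Rightarrow> bool" where
  "in_Lp M p f \<longleftrightarrow> f \<in> borel_measurable M \<and> integrable M (\<lambda>\<omega>. \<bar>f \<omega>\<bar> powr p)"

definition Lp_norm :: "'a measure \<Rightarrow> real \<Rightarrow> ('a \<Rightarrow> real) \<Rightarrow> real" where
  "Lp_norm M p f = (\<integral>\<omega>. \<bar>f \<omega>\<bar> powr p \<partial>M) powr (1 / p)"

end

theory Submission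
  imports Defs
begin
definition fsup :: "('a \<Rightarrow> real) \<Rightarrow> 'a set" where
  "fsup u = {w. u w \<noteq> 0}"

definition psum :: "real \<Rightarrow> ('a \<Rightarrow> real) \<Rightarrow> real" where
  "psum p u = (\<Sum>w\<in>fsup u. \<bar>u w\<bar> powr p)"

definition pn :: "real \<Rightarrow> ('a \<Rightarrow> real) \<Rightarrow> real" where
  "pn p u = psum p u powr (1/p)"

lemma psum_superset:
  assumes "finite A" "fsup u \<subseteq> A" "p > 0"
  shows "psum p u = (\<Sum>w\<in>A. \<bar>u w\<bar> powr p)"
  unfolding psum_def
  by (rule sum.mono_neutral_left) (use assms in \<open>auto simp: fsup_def\<close>)

lemma psum_nonneg: "psum p u \<ge> 0"
  unfolding psum_def by (auto intro!: sum_nonneg)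

lemma pn_nonneg: "pn p u \<ge> 0"
  unfolding pn_def by simp

lemma psum_subset_le:
  assumes "finite (fsup u)" "finite A" "p > 0"
  shows "(\<Sum>w\<in>A. \<bar>u w\<bar> powr p) \<le> psum p u"
proof -
  have "(\<Sum>w\<in>A. \<bar>u w\<bar> powr p) = (\<Sum>w\<in>A \<inter> fsup u. \<bar>u w\<bar> powr p)"
    by (rule sum.mono_neutral_right) (use assms in \<open>auto simp: fsup_def\<close>)
  also have "\<dots> \<le> (\<Sum>w\<in>fsup u. \<bar>u w\<bar> powr p)"
    by (rule sum_mono2) (use assms in auto)
  finally show ?thesis unfolding psum_def .
qed

lemma pn_ge_point:
  assumes "finite (fsup u)" "p > 0"
  shows "\<bar>u w\<bar> \<le> pn p u"
proof -
  have "\<bar>u w\<bar> powr p \<le> psum p u"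
    using psum_subset_le[OF assms(1) _ assms(2), of "{w}"] by simp
  hence "(\<bar>u w\<bar> powr p) powr (1/p) \<le> psum p u powr (1/p)"
    using assms by (intro powr_mono2) auto
  thus ?thesis using assms by (simp add: pn_def powr_powr)
qed

lemma pn_ge_sum:
  assumes "finite (fsup u)" "finite A" "p > 0"
  shows "(\<Sum>w\<in>A. \<bar>u w\<bar> powr p) powr (1/p) \<le> pn p u"
  unfolding pn_def
  by (rule powr_mono2) (use assms psum_subset_le[OF assms] in \<open>auto intro!: sum_nonneg\<close>)

lemma pn_le_from_psum:
  assumes "psum p u \<le> B" "p > 0"
  shows "pn p u \<le> B powr (1/p)"
  unfolding pn_def by (rule powr_mono2) (use assms psum_nonneg in auto)

lemma powr_convex0:
  fixes x y l p :: real
  assumes "p \<ge> 1" "x \<ge> 0" "y \<ge> 0" "0 \<le> l" "l \<le> 1"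
  shows "(l * x + (1 - l) * y) powr p \<le> l * x powr p + (1 - l) * y powr p"
proof -
  have lp: "t powr p \<le> t" if "0 \<le> t" "t \<le> 1" for t :: real
  proof (cases "t = 0")
    case False
    hence "t powr p \<le> t powr 1" using that assms(1) by (intro powr_mono') auto
    thus ?thesis using False that by simp
  qed (use assms in simp)
  show ?thesis
  proof (cases "x = 0 \<or> y = 0")
    case True
    then show ?thesis
    proof
      assume "x = 0"
      have "((1 - l) * y) powr p = (1 - l) powr p * y powr p"
        using assms by (simp add: powr_mult)
      also have "\<dots> \<le> (1 - l) * y powr p"
        by (rule mult_right_mono) (use lp[of "1-l"] assms in auto)
      finally show ?thesis using \<open>x = 0\<close> assms by simp
    next
      assume "y = 0"
      have "(l * x) powr p = l powr p * x powr p"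
        using assms by (simp add: powr_mult)
      also have "\<dots> \<le> l * x powr p"
        by (rule mult_right_mono) (use lp[of "l"] assms in auto)
      finally show ?thesis using \<open>y = 0\<close> assms by simp
    qed
  next
    case False
    hence "x > 0" "y > 0" using assms by auto
    have "(\<lambda>x. x powr p) ((1 - (1 - l)) *\<^sub>R x + (1 - l) *\<^sub>R y)
        \<le> (1 - (1 - l)) * (\<lambda>x. x powr p) x + (1 - l) * (\<lambda>x. x powr p) y"
      by (rule convex_onD[OF powr_convex[OF assms(1)]]) (use assms \<open>x>0\<close> \<open>y>0\<close> in auto)
    thus ?thesis by simp
  qed
qed

lemma minkowski_sum:
  fixes a b :: "'a \<Rightarrow> real"
  assumes "finite A" "p \<ge> 1"
  shows "(\<Sum>i\<in>A. \<bar>a i + b i\<bar> powr p) powr (1/p)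
     \<le> (\<Sum>i\<in>A. \<bar>a i\<bar> powr p) powr (1/p) + (\<Sum>i\<in>A. \<bar>b i\<bar> powr p) powr (1/p)"
proof -
  define SA where "SA = (\<Sum>i\<in>A. \<bar>a i\<bar> powr p)"
  define SB where "SB = (\<Sum>i\<in>A. \<bar>b i\<bar> powr p)"
  define NA where "NA = SA powr (1/p)"
  define NB where "NB = SB powr (1/p)"
  have p0: "p > 0" using assms by simp
  have SA0: "SA \<ge> 0" "SB \<ge> 0" unfolding SA_def SB_def by (auto intro!: sum_nonneg)
  show ?thesis
  proof (cases "SA = 0 \<or> SB = 0")
    case True
    then show ?thesis
    proof
      assume "SA = 0"
      hence "\<forall>i\<in>A. \<bar>a i\<bar> powr p = 0"
        using sum_nonneg_eq_0_iff[OF assms(1), of "\<lambda>i. \<bar>a i\<bar> powr p"] unfolding SA_def by auto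
      hence "\<forall>i\<in>A. a i = 0" by simp
      hence "(\<Sum>i\<in>A. \<bar>a i + b i\<bar> powr p) = SB" unfolding SB_def by (auto intro!: sum.cong)
      thus ?thesis using \<open>SA = 0\<close> unfolding SB_def SA_def by simp
    next
      assume "SB = 0"
      hence "\<forall>i\<in>A. \<bar>b i\<bar> powr p = 0"
        using sum_nonneg_eq_0_iff[OF assms(1), of "\<lambda>i. \<bar>b i\<bar> powr p"] unfolding SB_def by auto
      hence "\<forall>i\<in>A. b i = 0" by simp
      hence "(\<Sum>i\<in>A. \<bar>a i + b i\<bar> powr p) = SA" unfolding SA_def by (auto intro!: sum.cong)
      thus ?thesis using \<open>SB = 0\<close> unfolding SB_def SA_def by simp
    qed
  next
    case False
    hence pos: "SA > 0" "SB > 0" using SA0 by auto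
    hence NAp: "NA > 0" "NB > 0" unfolding NA_def NB_def by auto
    have NAp': "NA powr p = SA" "NB powr p = SB"
      unfolding NA_def NB_def using pos p0 by (auto simp: powr_powr)
    define l where "l = NA / (NA + NB)"
    have l01: "0 \<le> l" "l \<le> 1" unfolding l_def using NAp by auto
    have l1: "1 - l = NB / (NA + NB)" unfolding l_def using NAp by (auto simp: field_simps)
    have key: "\<bar>a i + b i\<bar> powr p \<le> (NA + NB) powr p *
        (l * (\<bar>a i\<bar> / NA) powr p + (1 - l) * (\<bar>b i\<bar> / NB) powr p)" for i
    proof -
      have "\<bar>a i + b i\<bar> powr p \<le> (\<bar>a i\<bar> + \<bar>b i\<bar>) powr p"
        by (rule powr_mono2) (use p0 in auto)
      also have "\<bar>a i\<bar> + \<bar>b i\<bar> = (NA + NB) * (l * (\<bar>a i\<bar> / NA) + (1 - l) * (\<bar>b i\<bar> / NB))"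
      proof -
        have e1: "l * (\<bar>a i\<bar> / NA) = \<bar>a i\<bar> / (NA + NB)" unfolding l_def using NAp by simp
        have e2: "(1 - l) * (\<bar>b i\<bar> / NB) = \<bar>b i\<bar> / (NA + NB)" unfolding l1 using NAp by simp
        have "NA + NB > 0" using NAp by simp
        thus ?thesis unfolding e1 e2 by (simp add: add_divide_distrib[symmetric])
      qed
      also have "((NA + NB) * (l * (\<bar>a i\<bar> / NA) + (1 - l) * (\<bar>b i\<bar> / NB))) powr p
          = (NA + NB) powr p * (l * (\<bar>a i\<bar> / NA) + (1 - l) * (\<bar>b i\<bar> / NB)) powr p"
        by (rule powr_mult)
      also have "\<dots> \<le> (NA + NB) powr p * (l * (\<bar>a i\<bar> / NA) powr p + (1 - l) * (\<bar>b i\<bar> / NB) powr p)"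
        by (rule mult_left_mono, rule powr_convex0) (use assms l01 NAp in auto)
      finally show ?thesis .
    qed
    have "(\<Sum>i\<in>A. \<bar>a i + b i\<bar> powr p) \<le> (\<Sum>i\<in>A. (NA + NB) powr p *
        (l * (\<bar>a i\<bar> / NA) powr p + (1 - l) * (\<bar>b i\<bar> / NB) powr p))"
      by (rule sum_mono) (rule key)
    also have "\<dots> = (NA + NB) powr p * (l * (\<Sum>i\<in>A. (\<bar>a i\<bar> / NA) powr p)
         + (1 - l) * (\<Sum>i\<in>A. (\<bar>b i\<bar> / NB) powr p))"
      by (simp add: distrib_left sum.distrib sum_distrib_left mult.assoc)
    also have "(\<Sum>i\<in>A. (\<bar>a i\<bar> / NA) powr p) = SA / NA powr p"
      unfolding SA_def using NAp by (simp add: powr_divide sum_divide_distrib)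
    also have "(\<Sum>i\<in>A. (\<bar>b i\<bar> / NB) powr p) = SB / NB powr p"
      unfolding SB_def using NAp by (simp add: powr_divide sum_divide_distrib)
    finally have F: "(\<Sum>i\<in>A. \<bar>a i + b i\<bar> powr p) \<le> (NA + NB) powr p"
      using NAp' pos by simp
    have "(\<Sum>i\<in>A. \<bar>a i + b i\<bar> powr p) powr (1/p) \<le> ((NA + NB) powr p) powr (1/p)"
      by (rule powr_mono2) (use p0 F in \<open>auto intro!: sum_nonneg\<close>)
    also have "\<dots> = NA + NB" using NAp p0 by (simp add: powr_powr)
    finally show ?thesis unfolding NA_def NB_def SA_def SB_def .
  qed
qed

lemma fsup_add_subset: "fsup (\<lambda>w. u w + v w) \<subseteq> fsup u \<union> fsup v"
  by (auto simp: fsup_def)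

lemma fin_fsup_add: "finite (fsup u) \<Longrightarrow> finite (fsup v) \<Longrightarrow> finite (fsup (\<lambda>w. u w + v w))"
  by (rule finite_subset[OF fsup_add_subset]) simp

lemma pn_triangle:
  assumes "finite (fsup u)" "finite (fsup v)" "p \<ge> 1"
  shows "pn p (\<lambda>w. u w + v w) \<le> pn p u + pn p v"
proof -
  let ?A = "fsup u \<union> fsup v"
  have p0: "p > 0" using assms by simp
  have "pn p (\<lambda>w. u w + v w) = (\<Sum>i\<in>?A. \<bar>u i + v i\<bar> powr p) powr (1/p)"
    unfolding pn_def using assms fsup_add_subset[of u v] by (subst psum_superset[of ?A]) auto
  also have "\<dots> \<le> (\<Sum>i\<in>?A. \<bar>u i\<bar> powr p) powr (1/p) + (\<Sum>i\<in>?A. \<bar>v i\<bar> powr p) powr (1/p)"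
    by (rule minkowski_sum) (use assms in auto)
  also have "\<dots> = pn p u + pn p v"
    unfolding pn_def using assms p0 by (subst (1 2) psum_superset[of ?A]) auto
  finally show ?thesis .
qed

lemma pn_uminus: "pn p (\<lambda>w. - u w) = pn p u"
  unfolding pn_def psum_def fsup_def by simp

lemma pn_sym: "pn p (\<lambda>w. u w - v w) = pn p (\<lambda>w. v w - u w)"
  using pn_uminus[of p "\<lambda>w. u w - v w"] by simp

lemma fin_fsup_diff: "finite (fsup u) \<Longrightarrow> finite (fsup v) \<Longrightarrow> finite (fsup (\<lambda>w. u w - v w))"
  by (rule finite_subset[of _ "fsup u \<union> fsup v"]) (auto simp: fsup_def)

lemma pn_triangle_diff:
  assumes "finite (fsup u)" "finite (fsup v)" "finite (fsup z)" "p \<ge> 1"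
  shows "pn p (\<lambda>w. u w - z w) \<le> pn p (\<lambda>w. u w - v w) + pn p (\<lambda>w. v w - z w)"
  using pn_triangle[of "\<lambda>w. u w - v w" "\<lambda>w. v w - z w" p] assms fin_fsup_diff by auto

lemma pn_zero: "pn p (\<lambda>w. 0) = 0"
  unfolding pn_def psum_def fsup_def by simp

lemma pn_Lp:
  assumes "finite (fsup u)" "p > 0"
  shows "Lp_norm (count_space UNIV) p u = pn p u"
proof -
  have "{a \<in> UNIV. \<bar>u a\<bar> powr p \<noteq> 0} = fsup u" by (auto simp: fsup_def)
  thus ?thesis unfolding Lp_norm_def pn_def psum_def
    using assms by (subst lebesgue_integral_count_space_finite_support) auto
qed

lemma in_Lp_fin:
  assumes "finite (fsup u)"
  shows "in_Lp (count_space UNIV) p u"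
  unfolding in_Lp_def
proof
  show "u \<in> borel_measurable (count_space UNIV)" by simp
  have I: "integrable (count_space UNIV) (\<lambda>x. \<Sum>a\<in>fsup u. indicator {a} x *\<^sub>R (\<bar>u a\<bar> powr p))"
    by (intro Bochner_Integration.integrable_sum integrable_scaleR_left integrable_real_indicator) auto
  have eq: "(\<lambda>x. \<Sum>a\<in>fsup u. indicator {a} x *\<^sub>R (\<bar>u a\<bar> powr p)) = (\<lambda>x. \<bar>u x\<bar> powr p)"
  proof
    fix x show "(\<Sum>a\<in>fsup u. indicator {a} x *\<^sub>R (\<bar>u a\<bar> powr p)) = \<bar>u x\<bar> powr p"
    proof (cases "x \<in> fsup u")
      case True
      have "(\<Sum>a\<in>fsup u. indicator {a} x *\<^sub>R (\<bar>u a\<bar> powr p)) = (\<Sum>a\<in>{x}. indicator {a} x *\<^sub>R (\<bar>u a\<bar> powr p))"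
        by (rule sum.mono_neutral_right) (use assms True in auto)
      then show ?thesis by simp
    next
      case False
      then show ?thesis by (auto simp: fsup_def indicator_def intro!: sum.neutral)
    qed
  qed
  show "integrable (count_space UNIV) (\<lambda>x. \<bar>u x\<bar> powr p)" using I unfolding eq .
qed

lemma lamp_path_trans:
  assumes "lamp_path y b z" "lamp_path x a y"
  shows "lamp_path x (a + b) z"
  using assms by (induction y b z rule: lamp_path.induct) (auto intro: lamp_path.step)

lemma mult_up: "lamp_mult (f, n) (delta0, 0) = (f(n := f n + 1), n)"
  unfolding lamp_mult_def delta0_def by (auto simp: fun_eq_iff)

lemma mult_down: "lamp_mult (f, n) (\<lambda>k. - delta0 k, 0) = (f(n := f n - 1), n)"
  unfolding lamp_mult_def delta0_def by (auto simp: fun_eq_iff)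

lemma mult_right: "lamp_mult (f, n) (\<lambda>_. 0, 1) = (f, n + 1)"
  unfolding lamp_mult_def by (auto simp: fun_eq_iff)

lemma mult_left: "lamp_mult (f, n) (\<lambda>_. 0, -1) = (f, n - 1)"
  unfolding lamp_mult_def by (auto simp: fun_eq_iff)

lemma gens_cases:
  assumes "s \<in> lamp_gens"
  obtains "s = (delta0, 0)" | "s = (\<lambda>k. - delta0 k, 0)" | "s = (\<lambda>_. 0, 1)" | "s = (\<lambda>_. 0, -1)"
  using assms unfolding lamp_gens_def by auto

lemma path_one: "s \<in> lamp_gens \<Longrightarrow> lamp_path x (Suc 0) (lamp_mult x s)"
  using lamp_path.step[OF lamp_path.refl] by blast

lemma path_right: "lamp_path (f, n) k (f, n + int k)"
proof (induction k)
  case 0 then show ?case using lamp_path.refl by simp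
next
  case (Suc k)
  have "lamp_path (f, n) (Suc k) (lamp_mult (f, n + int k) (\<lambda>_. 0, 1))"
    by (rule lamp_path.step[OF Suc]) (simp add: lamp_gens_def)
  moreover have "lamp_mult (f, n + int k) (\<lambda>_. 0, 1) = (f, n + int (Suc k))" by (simp add: mult_right)
  ultimately show ?case by (simp only:)
qed

lemma path_left: "lamp_path (f, n) k (f, n - int k)"
proof (induction k)
  case 0 then show ?case using lamp_path.refl by simp
next
  case (Suc k)
  have "lamp_path (f, n) (Suc k) (lamp_mult (f, n - int k) (\<lambda>_. 0, -1))"
    by (rule lamp_path.step[OF Suc]) (simp add: lamp_gens_def)
  moreover have "lamp_mult (f, n - int k) (\<lambda>_. 0, -1) = (f, n - int (Suc k))" by (simp add: mult_left)
  ultimately show ?case by (simp only:)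
qed

lemma path_move: "lamp_path (f, n) (nat \<bar>m - n\<bar>) (f, m)"
proof (cases "m \<ge> n")
  case True
  then show ?thesis using path_right[of f n "nat (m - n)"] by simp
next
  case False
  then show ?thesis using path_left[of f n "nat (n - m)"] by simp
qed

lemma path_up: "lamp_path (f, n) k (f(n := f n + int k), n)"
proof (induction k)
  case 0 then show ?case using lamp_path.refl by simp
next
  case (Suc k)
  have "lamp_path (f, n) (Suc k) (lamp_mult (f(n := f n + int k), n) (delta0, 0))"
    by (rule lamp_path.step[OF Suc]) (simp add: lamp_gens_def)
  moreover have "lamp_mult (f(n := f n + int k), n) (delta0, 0) = (f(n := f n + int (Suc k)), n)"
    by (simp add: mult_up fun_eq_iff)
  ultimately show ?case by (simp only:)
qed

lemma path_down: "lamp_path (f, n) k (f(n := f n - int k), n)"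
proof (induction k)
  case 0 then show ?case using lamp_path.refl by simp
next
  case (Suc k)
  have "lamp_path (f, n) (Suc k) (lamp_mult (f(n := f n - int k), n) (\<lambda>k. - delta0 k, 0))"
    by (rule lamp_path.step[OF Suc]) (simp add: lamp_gens_def)
  moreover have "lamp_mult (f(n := f n - int k), n) (\<lambda>k. - delta0 k, 0) = (f(n := f n - int (Suc k)), n)"
    by (simp add: mult_down fun_eq_iff)
  ultimately show ?case by (simp only:)
qed

lemma path_set: "lamp_path (f, n) (nat \<bar>v - f n\<bar>) (f(n := v), n)"
proof (cases "v \<ge> f n")
  case True
  then show ?thesis using path_up[of f n "nat (v - f n)"] by simp
next
  case False
  then show ?thesis using path_down[of f n "nat (f n - v)"] by simp
qed

lemma sweep:
  assumes "a \<le> b" "\<forall>j. j < a \<or> b < j \<longrightarrow> f j = g j"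
  shows "lamp_path (f, a) (nat (b - a) + (\<Sum>j\<in>{a..b}. nat \<bar>g j - f j\<bar>)) (g, b)"
  using assms
proof (induction "nat (b - a)" arbitrary: f a)
  case 0
  hence "a = b" by simp
  have "f(a := g a) = g"
  proof (rule ext)
    fix x show "(f(a := g a)) x = g x"
    proof (cases "x = b")
      case False
      hence "x < a \<or> b < x" using \<open>a = b\<close> by arith
      hence "f x = g x" using 0(3) by blast
      thus ?thesis using \<open>a = b\<close> False by simp
    qed (use \<open>a = b\<close> in simp)
  qed
  moreover have "lamp_path (f, a) (nat \<bar>g a - f a\<bar>) (f(a := g a), a)" by (rule path_set)
  ultimately have "lamp_path (f, a) (nat \<bar>g a - f a\<bar>) (g, b)" using \<open>a = b\<close> by simp
  moreover have "nat (b - a) + (\<Sum>j\<in>{a..b}. nat \<bar>g j - f j\<bar>) = nat \<bar>g a - f a\<bar>" using \<open>a = b\<close> by simp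
  ultimately show ?case by simp
next
  case (Suc k)
  define f' where "f' = f(a := g a)"
  have ab: "a < b" using Suc by simp
  have k: "k = nat (b - (a + 1))" using Suc by simp
  have agree: "\<forall>j. j < a + 1 \<or> b < j \<longrightarrow> f' j = g j" using Suc unfolding f'_def by auto
  have IH: "lamp_path (f', a + 1) (nat (b - (a + 1)) + (\<Sum>j\<in>{a+1..b}. nat \<bar>g j - f' j\<bar>)) (g, b)"
    using Suc.hyps(1)[OF k] ab agree by simp
  have s1: "(\<Sum>j\<in>{a+1..b}. nat \<bar>g j - f' j\<bar>) = (\<Sum>j\<in>{a+1..b}. nat \<bar>g j - f j\<bar>)"
    unfolding f'_def by (intro sum.cong) auto
  have p1: "lamp_path (f, a) (nat \<bar>g a - f a\<bar>) (f', a)" unfolding f'_def by (rule path_set)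
  have p2: "lamp_path (f', a) (nat \<bar>(a + 1) - a\<bar>) (f', a + 1)" by (rule path_move)
  have p12: "lamp_path (f, a) (nat \<bar>g a - f a\<bar> + 1) (f', a + 1)"
    using lamp_path_trans[OF p2 p1] by simp
  have P: "lamp_path (f, a) (nat \<bar>g a - f a\<bar> + 1 + (nat (b - (a + 1)) + (\<Sum>j\<in>{a+1..b}. nat \<bar>g j - f j\<bar>))) (g, b)"
    using lamp_path_trans[OF IH p12] s1 by simp
  have split: "{a..b} = insert a {a+1..b}" using ab by auto
  have e1: "(\<Sum>j\<in>{a..b}. nat \<bar>g j - f j\<bar>) = nat \<bar>g a - f a\<bar> + (\<Sum>j\<in>{a+1..b}. nat \<bar>g j - f j\<bar>)"
    unfolding split by (subst sum.insert) auto
  have e2: "nat (b - a) = 1 + nat (b - (a + 1))" using ab by simp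
  have eqc: "nat (b - a) + (\<Sum>j\<in>{a..b}. nat \<bar>g j - f j\<bar>)
     = nat \<bar>g a - f a\<bar> + 1 + (nat (b - (a + 1)) + (\<Sum>j\<in>{a+1..b}. nat \<bar>g j - f j\<bar>))"
    unfolding e1 e2 by linarith
  show ?case unfolding eqc by (rule P)
qed

lemma path_general:
  assumes "lo \<le> n" "lo \<le> m" "n \<le> hi" "m \<le> hi" "\<forall>j. j < lo \<or> hi < j \<longrightarrow> f j = g j"
  shows "lamp_path (f, n) (nat (n - lo) + (nat (hi - lo) + (\<Sum>j\<in>{lo..hi}. nat \<bar>g j - f j\<bar>)) + nat (hi - m)) (g, m)"
proof -
  have p1: "lamp_path (f, n) (nat (n - lo)) (f, lo)" using path_move[of f n lo] assms by simp
  have p2: "lamp_path (f, lo) (nat (hi - lo) + (\<Sum>j\<in>{lo..hi}. nat \<bar>g j - f j\<bar>)) (g, hi)"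
    using sweep[of lo hi f g] assms by simp
  have p3: "lamp_path (g, hi) (nat (hi - m)) (g, m)" using path_move[of g hi m] assms by simp
  show ?thesis using lamp_path_trans[OF p3 lamp_path_trans[OF p2 p1]] .
qed

lemma carrier_iff: "(f, n) \<in> lamp_carrier \<longleftrightarrow> finite {k. f k \<noteq> 0}"
  unfolding lamp_carrier_def by simp

lemma fin_upd: "finite {k. f k \<noteq> 0} \<Longrightarrow> finite {k. (f(a := v)) k \<noteq> 0}"
  by (rule finite_subset[of _ "insert a {k. f k \<noteq> 0}"]) auto

lemma carrier_step:
  assumes "y \<in> lamp_carrier" "s \<in> lamp_gens"
  shows "lamp_mult y s \<in> lamp_carrier"
proof -
  obtain f n where y: "y = (f, n)" by (cases y)
  have fin: "finite {k. f k \<noteq> 0}" using assms y carrier_iff by simp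
  have fins: "finite {k. (f(n := f n + 1)) k \<noteq> 0}" "finite {k. (f(n := f n - 1)) k \<noteq> 0}"
    using fin_upd[OF fin] by blast+
  show ?thesis using assms(2)
  proof (cases rule: gens_cases)
    case 1
    show ?thesis unfolding 1 y mult_up carrier_iff by (rule fins(1))
  next
    case 2
    show ?thesis unfolding 2 y mult_down carrier_iff by (rule fins(2))
  next
    case 3
    show ?thesis unfolding 3 y mult_right carrier_iff by (rule fin)
  next
    case 4
    show ?thesis unfolding 4 y mult_left carrier_iff by (rule fin)
  qed
qed

lemma carrier_path: "lamp_path x k y \<Longrightarrow> x \<in> lamp_carrier \<Longrightarrow> y \<in> lamp_carrier"
  by (induction rule: lamp_path.induct) (auto intro: carrier_step)

lemma dist_le: "lamp_path x k y \<Longrightarrow> lamp_dist x y \<le> k"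
  unfolding lamp_dist_def by (rule Least_le)

lemma dist_path: "lamp_path x k y \<Longrightarrow> lamp_path x (lamp_dist x y) y"
  unfolding lamp_dist_def by (rule LeastI)

lemma connected:
  assumes "(f, n) \<in> lamp_carrier" "(g, m) \<in> lamp_carrier"
  shows "\<exists>k. lamp_path (f, n) k (g, m)"
proof -
  have "finite ({k. f k \<noteq> 0} \<union> {k. g k \<noteq> 0})" using assms carrier_iff by auto
  then obtain B where B: "\<forall>j \<in> {k. f k \<noteq> 0} \<union> {k. g k \<noteq> 0}. \<bar>j\<bar> \<le> B"
    unfolding finite_int_iff_bounded_le by (auto simp: subset_iff)
  define lo where "lo = min (min n m) (- B)"
  define hi where "hi = max (max n m) B"
  have agree: "\<forall>j. j < lo \<or> hi < j \<longrightarrow> f j = g j"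
  proof (intro allI impI)
    fix j assume "j < lo \<or> hi < j"
    hence "\<bar>j\<bar> > B" unfolding lo_def hi_def by auto
    show "f j = g j"
    proof (rule ccontr)
      assume "f j \<noteq> g j"
      hence "j \<in> {k. f k \<noteq> 0} \<union> {k. g k \<noteq> 0}" by auto
      hence "\<bar>j\<bar> \<le> B" using B by blast
      thus False using \<open>\<bar>j\<bar> > B\<close> by simp
    qed
  qed
  have "lo \<le> n" "lo \<le> m" "n \<le> hi" "m \<le> hi" unfolding lo_def hi_def by auto
  then show ?thesis using path_general[OF _ _ _ _ agree] by blast
qed

definition rf :: "(int \<Rightarrow> int) \<Rightarrow> int \<Rightarrow> int" where "rf f j = f (- j)"
definition G :: "(int \<Rightarrow> int) \<Rightarrow> int \<Rightarrow> (int \<times> int) set" where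
  "G f k = {(j, f j) | j. j < k \<and> f j \<noteq> 0}"
definition FS :: "(int \<times> int) set set" where "FS = Collect finite"
definition idx :: "int \<Rightarrow> int \<Rightarrow> (int \<times> int) set \<Rightarrow> nat \<times> real" where
  "idx t k A = (to_nat_on FS A, real_of_int (4 * k + t))"
definition phi :: "real \<Rightarrow> int \<Rightarrow> real" where
  "phi p j = (real_of_int j + 1) powr (2/3 - 1/p)"
definition treeF :: "real \<Rightarrow> int \<Rightarrow> (int \<Rightarrow> int) \<Rightarrow> int \<Rightarrow> nat \<times> real \<Rightarrow> real" where
  "treeF p t f n w = (let k = (\<lfloor>snd w\<rfloor> - t) div 4 in
     if snd w = real_of_int (4 * k + t) \<and> k \<le> n \<and> G f k \<noteq> {} \<and> fst w = to_nat_on FS (G f k)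
     then phi p (n - k) else 0)"
definition lampF :: "(int \<Rightarrow> int) \<Rightarrow> nat \<times> real \<Rightarrow> real" where
  "lampF f w = (let j = (\<lfloor>snd w\<rfloor> - 1) div 4 in
     if fst w = 0 \<and> snd w = real_of_int (4 * j + 1) then real_of_int (f j) else 0)"
definition curF :: "int \<Rightarrow> nat \<times> real \<Rightarrow> real" where
  "curF n w = (if w = (0, 0) then real_of_int n else 0)"
definition theta :: "real \<Rightarrow> lamp \<Rightarrow> nat \<times> real \<Rightarrow> real" where
  "theta p x w = curF (snd x) w + lampF (fst x) w + treeF p 2 (fst x) (snd x) w
     + treeF p 3 (rf (fst x)) (- snd x) w"

abbreviation fin :: "(int \<Rightarrow> int) \<Rightarrow> bool" where "fin f \<equiv> finite {j. f j \<noteq> 0}"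

lemma fin_G: "fin f \<Longrightarrow> finite (G f k)"
  unfolding G_def by (rule finite_subset[of _ "(\<lambda>j. (j, f j)) ` {j. f j \<noteq> 0}"]) auto

lemma G_FS: "fin f \<Longrightarrow> G f k \<in> FS"
  using fin_G unfolding FS_def by auto

lemma countable_FS: "countable FS"
  unfolding FS_def by (rule countable_Collect_finite)

lemma to_nat_FS_eq: "A \<in> FS \<Longrightarrow> B \<in> FS \<Longrightarrow> to_nat_on FS A = to_nat_on FS B \<longleftrightarrow> A = B"
  using inj_on_to_nat_on[OF countable_FS] unfolding inj_on_def by blast

lemma fin_rf: "fin f \<Longrightarrow> fin (rf f)"
proof -
  assume "fin f"
  have "{j. rf f j \<noteq> 0} = uminus ` {j. f j \<noteq> 0}"
    unfolding rf_def by (auto simp: image_iff intro!: exI[of _ "- _"])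
  thus ?thesis using \<open>fin f\<close> by simp
qed

lemma decode:
  assumes "0 \<le> t" "t < 4"
  shows "(\<lfloor>real_of_int (4 * k + t)\<rfloor> - t) div 4 = k"
proof -
  have "\<lfloor>real_of_int (4 * k + t)\<rfloor> = 4 * k + t" by (simp only: floor_of_int)
  thus ?thesis by simp
qed

lemma treeF_idx:
  assumes "0 \<le> t" "t < 4" "A \<in> FS" "fin f"
  shows "treeF p t f n (idx t k A) = (if k \<le> n \<and> G f k \<noteq> {} \<and> A = G f k then phi p (n - k) else 0)"
  using assms decode[OF assms(1,2), of k] to_nat_FS_eq[OF assms(3) G_FS[OF assms(4)]]
  unfolding treeF_def idx_def Let_def by auto

lemma treeF_nz:
  assumes "treeF p t f n w \<noteq> 0"
  shows "\<exists>k. w = idx t k (G f k) \<and> k \<le> n \<and> G f k \<noteq> {}"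
proof -
  define k where "k = (\<lfloor>snd w\<rfloor> - t) div 4"
  have "snd w = real_of_int (4 * k + t) \<and> k \<le> n \<and> G f k \<noteq> {} \<and> fst w = to_nat_on FS (G f k)"
    using assms unfolding treeF_def k_def Let_def by (auto split: if_splits)
  hence "w = idx t k (G f k) \<and> k \<le> n \<and> G f k \<noteq> {}"
    unfolding idx_def by (cases w) auto
  thus ?thesis by blast
qed

lemma treeF_snd: "treeF p t f n w \<noteq> 0 \<Longrightarrow> \<exists>k. snd w = real_of_int (4 * k + t)"
  using treeF_nz[of p t f n w] unfolding idx_def by auto

lemma lampF_nz: "lampF f w \<noteq> 0 \<Longrightarrow> \<exists>j. w = (0, real_of_int (4 * j + 1))"
  unfolding lampF_def Let_def by (cases w) (auto split: if_splits)

lemma curF_nz: "curF n w \<noteq> 0 \<Longrightarrow> w = (0, 0)"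
  unfolding curF_def by (auto split: if_splits)

lemma mod4_distinct:
  fixes k k' t t' :: int
  assumes "0 \<le> t" "t < 4" "0 \<le> t'" "t' < 4" "t \<noteq> t'"
  shows "real_of_int (4 * k + t) \<noteq> real_of_int (4 * k' + t')"
proof
  assume "real_of_int (4 * k + t) = real_of_int (4 * k' + t')"
  hence "4 * k + t = 4 * k' + t'" by linarith
  thus False using assms by presburger
qed

lemma treeF_other:
  assumes "0 \<le> t" "t < 4" "0 \<le> t'" "t' < 4" "t \<noteq> t'"
  shows "treeF p t' g m (idx t k A) = 0"
proof (rule ccontr)
  assume "treeF p t' g m (idx t k A) \<noteq> 0"
  then obtain k' where "snd (idx t k A) = real_of_int (4 * k' + t')" using treeF_snd by blast
  thus False using mod4_distinct[OF assms, of k k'] unfolding idx_def by simp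
qed

lemma lampF_idx: "0 \<le> t \<Longrightarrow> t < 4 \<Longrightarrow> t \<noteq> 1 \<Longrightarrow> lampF f (idx t k A) = 0"
proof (rule ccontr)
  assume a: "0 \<le> t" "t < 4" "t \<noteq> 1" "lampF f (idx t k A) \<noteq> 0"
  then obtain j where "idx t k A = (0, real_of_int (4 * j + 1))" using lampF_nz by blast
  hence "real_of_int (4 * k + t) = real_of_int (4 * j + 1)" unfolding idx_def by simp
  thus False using mod4_distinct[of t 1 k j] a by simp
qed

lemma curF_idx: "0 < t \<Longrightarrow> t < 4 \<Longrightarrow> curF n (idx t k A) = 0"
proof (rule ccontr)
  assume a: "0 < t" "t < 4" "curF n (idx t k A) \<noteq> 0"
  hence "real_of_int (4 * k + t) = real_of_int (4 * 0 + 0)" using curF_nz unfolding idx_def by fastforce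
  thus False using mod4_distinct[of t 0 k 0] a by simp
qed

lemma theta_idx2:
  assumes "A \<in> FS" "fin f"
  shows "theta p (f, n) (idx 2 k A) = (if k \<le> n \<and> G f k \<noteq> {} \<and> A = G f k then phi p (n - k) else 0)"
  unfolding theta_def using treeF_idx[OF _ _ assms] treeF_other[of 2 3] lampF_idx[of 2] curF_idx[of 2] by simp

lemma theta_idx3:
  assumes "A \<in> FS" "fin f"
  shows "theta p (f, n) (idx 3 k A) = (if k \<le> - n \<and> G (rf f) k \<noteq> {} \<and> A = G (rf f) k then phi p (- n - k) else 0)"
  unfolding theta_def using treeF_idx[OF _ _ assms(1) fin_rf[OF assms(2)]] treeF_other[of 3 2] lampF_idx[of 3] curF_idx[of 3] by simp

lemma treeF_lamp: "treeF p t f n (0, real_of_int (4 * j + 1)) = 0" if "0 \<le> t" "t < 4" "t \<noteq> 1"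
proof (rule ccontr)
  assume "treeF p t f n (0, real_of_int (4 * j + 1)) \<noteq> 0"
  then obtain k where "real_of_int (4 * j + 1) = real_of_int (4 * k + t)" using treeF_snd by fastforce
  thus False using mod4_distinct[of 1 t j k] that by simp
qed

lemma treeF_cur: "treeF p t f n (0, 0) = 0" if "0 < t" "t < 4"
proof (rule ccontr)
  assume "treeF p t f n (0, 0) \<noteq> 0"
  then obtain k where "real_of_int (4 * 0 + 0) = real_of_int (4 * k + t)" using treeF_snd by fastforce
  thus False using mod4_distinct[of 0 t 0 k] that by simp
qed

lemma theta_lamp: "theta p (f, n) (0, real_of_int (4 * j + 1)) = real_of_int (f j)"
proof -
  have "lampF f (0, real_of_int (4 * j + 1)) = real_of_int (f j)"
    unfolding lampF_def Let_def using decode[of 1 j] by simp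
  moreover have "curF n (0, real_of_int (4 * j + 1)) = 0"
  proof -
    have "real_of_int (4 * j + 1) \<noteq> real_of_int (4 * 0 + 0)" by (rule mod4_distinct) auto
    thus ?thesis unfolding curF_def by simp
  qed
  ultimately show ?thesis unfolding theta_def using treeF_lamp[of 2] treeF_lamp[of 3] by simp
qed

lemma theta_cur: "theta p (f, n) (0, 0) = real_of_int n"
proof -
  have "lampF f (0, 0) = 0"
    unfolding lampF_def Let_def by simp
  thus ?thesis unfolding theta_def curF_def using treeF_cur[of 2] treeF_cur[of 3] by simp
qed

lemma fin_fsup_curF: "finite (fsup (curF n))"
  by (rule finite_subset[of _ "{(0,0)}"]) (auto simp: fsup_def dest: curF_nz)

lemma fin_fsup_lampF: "fin f \<Longrightarrow> finite (fsup (lampF f))"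
proof (rule finite_subset[of _ "(\<lambda>j. (0, real_of_int (4 * j + 1))) ` {j. f j \<noteq> 0}"])
  show "fsup (lampF f) \<subseteq> (\<lambda>j. (0, real_of_int (4 * j + 1))) ` {j. f j \<noteq> 0}"
  proof
    fix w assume "w \<in> fsup (lampF f)"
    hence nz: "lampF f w \<noteq> 0" by (simp add: fsup_def)
    then obtain j where w: "w = (0, real_of_int (4 * j + 1))" using lampF_nz by blast
    have "lampF f w = real_of_int (f j)" unfolding w lampF_def Let_def using decode[of 1 j] by simp
    thus "w \<in> (\<lambda>j. (0, real_of_int (4 * j + 1))) ` {j. f j \<noteq> 0}" using nz w by auto
  qed
qed simp

lemma G_nonempty_bound:
  assumes "\<forall>j. f j \<noteq> 0 \<longrightarrow> B \<le> j" "G f k \<noteq> {}"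
  shows "B < k"
  using assms unfolding G_def by force

lemma fin_bounded_below:
  assumes "fin f" obtains B where "\<forall>j. f j \<noteq> 0 \<longrightarrow> B \<le> j"
proof -
  obtain C where "\<forall>j\<in>{j. f j \<noteq> 0}. \<bar>j\<bar> \<le> C"
    using assms unfolding finite_int_iff_bounded_le by (auto simp: subset_iff)
  hence "\<forall>j. f j \<noteq> 0 \<longrightarrow> - C \<le> j" by force
  thus ?thesis using that by blast
qed

lemma fin_K: "fin f \<Longrightarrow> finite {k. k \<le> n \<and> G f k \<noteq> {}}"
proof -
  assume "fin f"
  then obtain B where B: "\<forall>j. f j \<noteq> 0 \<longrightarrow> B \<le> j" using fin_bounded_below by blast
  show ?thesis
    by (rule finite_subset[of _ "{B..n}"]) (use G_nonempty_bound[OF B] in force)+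
qed

lemma fin_fsup_treeF: "fin f \<Longrightarrow> finite (fsup (treeF p t f n))"
proof -
  assume f: "fin f"
  have "fsup (treeF p t f n) \<subseteq> (\<lambda>k. idx t k (G f k)) ` {k. k \<le> n \<and> G f k \<noteq> {}}"
    using treeF_nz unfolding fsup_def by blast
  thus ?thesis using fin_K[OF f] finite_subset by blast
qed

lemma fin_fsup_theta:
  assumes "fin f" shows "finite (fsup (theta p (f, n)))"
proof -
  have "fsup (theta p (f, n)) \<subseteq> fsup (curF n) \<union> fsup (lampF f) \<union> fsup (treeF p 2 f n) \<union> fsup (treeF p 3 (rf f) (- n))"
    unfolding fsup_def theta_def by auto
  thus ?thesis using fin_fsup_curF fin_fsup_lampF[OF assms] fin_fsup_treeF[OF assms]
      fin_fsup_treeF[OF fin_rf[OF assms]] finite_subset by (metis (no_types, lifting) finite_UnI)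
qed

lemma mvt_powr:
  fixes x r :: real
  assumes "0 < x"
  shows "\<exists>z. x < z \<and> z < x + 1 \<and> (x + 1) powr r - x powr r = r * z powr (r - 1)"
proof -
  have "\<exists>z::real. x < z \<and> z < x + 1 \<and> ((x + 1) powr r - x powr r = (x + 1 - x) * (r * z powr (r - 1)))"
    by (rule MVT2[where f = "\<lambda>z. z powr r" and f' = "\<lambda>z. r * z powr (r - 1)"])
       (use assms in \<open>auto intro!: has_real_derivative_powr\<close>)
  thus ?thesis by simp
qed

lemma phi_diff_bound:
  fixes x p :: real
  assumes "1 \<le> p" "1 \<le> x"
  shows "\<bar>(x + 1) powr (2/3 - 1/p) - x powr (2/3 - 1/p)\<bar> powr p \<le> x powr (-4/3)"
proof -
  define b where "b = 2/3 - 1/p"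
  have b: "-1/3 \<le> b" "b \<le> 1" "b - 1 \<le> 0"
    using assms unfolding b_def by (auto simp: field_simps)
  obtain z where z: "x < z" "z < x + 1" "(x + 1) powr b - x powr b = b * z powr (b - 1)"
    using mvt_powr[of x b] assms by auto
  have "\<bar>(x + 1) powr b - x powr b\<bar> = \<bar>b\<bar> * z powr (b - 1)" using z by (simp add: abs_mult)
  also have "\<dots> \<le> 1 * z powr (b - 1)"
    by (rule mult_right_mono) (use b in auto)
  also have "\<dots> \<le> x powr (b - 1)"
    using powr_mono2'[of "b - 1" x z] b z assms by simp
  finally have d: "\<bar>(x + 1) powr b - x powr b\<bar> \<le> x powr (b - 1)" .
  have "\<bar>(x + 1) powr b - x powr b\<bar> powr p \<le> (x powr (b - 1)) powr p"
    by (rule powr_mono2) (use assms d in auto)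
  also have "\<dots> = x powr ((b - 1) * p)" by (simp add: powr_powr)
  also have "\<dots> \<le> x powr (-4/3)"
  proof (rule powr_mono)
    have "(b - 1) * p = - p / 3 - 1" unfolding b_def using assms by (simp add: field_simps)
    thus "(b - 1) * p \<le> -4/3" using assms by simp
  qed (use assms in simp)
  finally show ?thesis unfolding b_def .
qed

definition S0 :: real where "S0 = suminf (\<lambda>j::nat. (real j + 1) powr (-4/3))"

lemma summable_S0: "summable (\<lambda>j::nat. (real j + 1) powr (-4/3))"
proof -
  have "summable (\<lambda>n::nat. real n powr (-4/3))" by (subst summable_real_powr_iff) simp
  from summable_ignore_initial_segment[OF this, of 1] show ?thesis by (simp add: add.commute)
qed

lemma sum_le_S0: "finite J \<Longrightarrow> (\<Sum>j\<in>J. (real j + 1) powr (-4/3)) \<le> S0"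
  unfolding S0_def by (rule sum_le_suminf[OF summable_S0]) auto

lemma S0_nonneg: "S0 \<ge> 0"
  using sum_le_S0[of "{}"] by simp

lemma lower_sum:
  fixes p :: real and a :: nat
  assumes "1 \<le> p"
  shows "min 1 (3 / (2 * p)) * real a powr (2 * p / 3) \<le> (\<Sum>j<a. (real j + 1) powr (2 * p / 3 - 1))"
proof (cases "a = 0")
  case True then show ?thesis by simp
next
  case False
  define e where "e = 2 * p / 3 - 1"
  have e1: "e + 1 = 2 * p / 3" unfolding e_def by simp
  have e1pos: "e + 1 > 0" using e1 assms by simp
  show ?thesis
  proof (cases "e < 0")
    case True
    have "(\<Sum>j<a. real a powr e) \<le> (\<Sum>j<a. (real j + 1) powr e)"
    proof (rule sum_mono)
      fix j assume "j \<in> {..<a}"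
      hence "real j + 1 \<le> real a" by simp
      thus "real a powr e \<le> (real j + 1) powr e" using powr_mono2'[of e "real j + 1" "real a"] True by simp
    qed
    moreover have "(\<Sum>j<a. real a powr e) = real a powr (e + 1)"
      using False by (simp add: powr_add)
    ultimately have "real a powr (2 * p / 3) \<le> (\<Sum>j<a. (real j + 1) powr e)" using e1 by simp
    moreover have "min 1 (3 / (2 * p)) * real a powr (2 * p / 3) \<le> real a powr (2 * p / 3)"
      by (rule mult_left_le_one_le) (use assms in auto)
    ultimately show ?thesis unfolding e_def by linarith
  next
    case False
    have step: "(real j + 1) powr (e + 1) - real j powr (e + 1) \<le> (e + 1) * (real j + 1) powr e" for j :: nat
    proof (cases "j = 0")
      case True then show ?thesis using e1pos False by simp
    next
      case False': False
      hence jpos: "real j > 0" by simp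
      obtain z where z: "real j < z" "z < real j + 1" "(real j + 1) powr (e + 1) - real j powr (e + 1) = (e + 1) * z powr (e + 1 - 1)"
        using mvt_powr[OF jpos, of "e + 1"] by auto
      have "z powr e \<le> (real j + 1) powr e" by (rule powr_mono2) (use False z jpos in auto)
      thus ?thesis using z e1pos by (simp add: mult_left_mono)
    qed
    have "real a powr (e + 1) = (\<Sum>j<a. (real (Suc j)) powr (e + 1) - real j powr (e + 1))"
      by (subst sum_lessThan_telescope) (use e1pos in simp)
    also have "\<dots> \<le> (\<Sum>j<a. (e + 1) * (real j + 1) powr e)"
      by (rule sum_mono) (use step in \<open>simp add: add.commute\<close>)
    also have "\<dots> = (e + 1) * (\<Sum>j<a. (real j + 1) powr e)" by (simp add: sum_distrib_left)
    finally have "real a powr (e + 1) / (e + 1) \<le> (\<Sum>j<a. (real j + 1) powr e)"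
      using e1pos by (simp add: field_simps)
    moreover have "real a powr (e + 1) / (e + 1) = (3 / (2 * p)) * real a powr (2 * p / 3)"
      unfolding e1 by simp
    moreover have "min 1 (3 / (2 * p)) * real a powr (2 * p / 3) \<le> (3 / (2 * p)) * real a powr (2 * p / 3)"
      by (rule mult_right_mono) auto
    ultimately show ?thesis unfolding e_def by linarith
  qed
qed

lemma pn_single:
  assumes "fsup u \<subseteq> {w0}" "p > 0"
  shows "pn p u = \<bar>u w0\<bar>"
proof -
  have "psum p u = \<bar>u w0\<bar> powr p" using psum_superset[of "{w0}" u p] assms by simp
  thus ?thesis unfolding pn_def using assms by (simp add: powr_powr)
qed

lemma phi0: "phi p 0 = 1" unfolding phi_def by simp

lemma tree_step_psum:
  assumes "fin f" "1 \<le> p" "0 \<le> t" "t < 4"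
  shows "psum p (\<lambda>w. treeF p t f n w - treeF p t f (n + 1) w) \<le> 1 + S0"
proof -
  define K where "K = {k. k \<le> n + 1 \<and> G f k \<noteq> {}}"
  define \<iota> where "\<iota> k = idx t k (G f k)" for k
  define u where "u w = treeF p t f n w - treeF p t f (n + 1) w" for w
  define g where "g k = \<bar>(if k \<le> n then phi p (n - k) else 0) - phi p (n + 1 - k)\<bar> powr p" for k
  have p0: "p > 0" using assms by simp
  have finK: "finite K" unfolding K_def by (rule fin_K[OF assms(1)])
  have inj: "inj_on \<iota> K" unfolding inj_on_def \<iota>_def idx_def by auto
  have sup: "fsup u \<subseteq> \<iota> ` K"
  proof
    fix w assume "w \<in> fsup u"
    hence "treeF p t f n w \<noteq> 0 \<or> treeF p t f (n + 1) w \<noteq> 0" unfolding fsup_def u_def by auto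
    thus "w \<in> \<iota> ` K"
    proof
      assume "treeF p t f n w \<noteq> 0"
      then obtain k where "w = idx t k (G f k)" "k \<le> n" "G f k \<noteq> {}" using treeF_nz by blast
      thus ?thesis unfolding K_def \<iota>_def by force
    next
      assume "treeF p t f (n + 1) w \<noteq> 0"
      then obtain k where "w = idx t k (G f k)" "k \<le> n + 1" "G f k \<noteq> {}" using treeF_nz by blast
      thus ?thesis unfolding K_def \<iota>_def by force
    qed
  qed
  have val: "\<bar>u (\<iota> k)\<bar> powr p = g k" if "k \<in> K" for k
    using that unfolding u_def \<iota>_def g_def K_def
    by (simp add: treeF_idx[OF assms(3,4) G_FS[OF assms(1)] assms(1)])
  have finK': "finite {k\<in>K. k \<le> n}" by (rule finite_subset[OF _ finK]) auto
  have "psum p u = (\<Sum>w\<in>\<iota> ` K. \<bar>u w\<bar> powr p)"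
    by (rule psum_superset) (use finK sup p0 in auto)
  also have "\<dots> = (\<Sum>k\<in>K. g k)" by (subst sum.reindex[OF inj]) (simp add: val)
  also have "\<dots> \<le> (\<Sum>k\<in>insert (n + 1) {k\<in>K. k \<le> n}. g k)"
    by (rule sum_mono2) (use finK' in \<open>auto simp: g_def K_def\<close>)
  also have "\<dots> = g (n + 1) + (\<Sum>k\<in>{k\<in>K. k \<le> n}. g k)"
    by (subst sum.insert) (use finK' in auto)
  also have "g (n + 1) = 1" unfolding g_def by (simp add: phi0)
  also have "(\<Sum>k\<in>{k\<in>K. k \<le> n}. g k) \<le> (\<Sum>k\<in>{k\<in>K. k \<le> n}. (real (nat (n - k)) + 1) powr (-4/3))"
  proof (rule sum_mono)
    fix k assume "k \<in> {k\<in>K. k \<le> n}"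
    hence kn: "k \<le> n" by simp
    define x where "x = real_of_int (n - k) + 1"
    have x1: "1 \<le> x" unfolding x_def using kn by simp
    have "g k = \<bar>x powr (2/3 - 1/p) - (x + 1) powr (2/3 - 1/p)\<bar> powr p"
      unfolding g_def x_def phi_def using kn by (simp add: algebra_simps)
    also have "\<dots> = \<bar>(x + 1) powr (2/3 - 1/p) - x powr (2/3 - 1/p)\<bar> powr p" by (simp add: abs_minus_commute)
    also have "\<dots> \<le> x powr (-4/3)" by (rule phi_diff_bound[OF assms(2) x1])
    also have "x = real (nat (n - k)) + 1" unfolding x_def using kn by simp
    finally show "g k \<le> (real (nat (n - k)) + 1) powr (-4/3)" .
  qed
  also have "\<dots> = (\<Sum>j\<in>(\<lambda>k. nat (n - k)) ` {k\<in>K. k \<le> n}. (real j + 1) powr (-4/3))"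
    by (subst sum.reindex) (auto simp: inj_on_def)
  also have "\<dots> \<le> S0" by (rule sum_le_S0) (use finK' in auto)
  finally show ?thesis unfolding u_def by simp
qed

definition Ct :: "real \<Rightarrow> real" where "Ct p = (1 + S0) powr (1 / p)"

lemma tree_step:
  assumes "fin f" "1 \<le> p" "0 \<le> t" "t < 4"
  shows "pn p (\<lambda>w. treeF p t f n w - treeF p t f (n + 1) w) \<le> Ct p"
    "pn p (\<lambda>w. treeF p t f (n + 1) w - treeF p t f n w) \<le> Ct p"
proof -
  show "pn p (\<lambda>w. treeF p t f n w - treeF p t f (n + 1) w) \<le> Ct p"
    unfolding Ct_def by (rule pn_le_from_psum[OF tree_step_psum[OF assms]]) (use assms in simp)
  thus "pn p (\<lambda>w. treeF p t f (n + 1) w - treeF p t f n w) \<le> Ct p"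
    using pn_sym by metis
qed

lemma G_upd: "k \<le> n \<Longrightarrow> G (f(n := v)) k = G f k"
  unfolding G_def by (rule Collect_cong) (auto, metis order_less_le_trans less_irrefl)

lemma treeF_upd: "treeF p t (f(n := v)) n = treeF p t f n"
proof
  fix w
  show "treeF p t (f(n := v)) n w = treeF p t f n w"
    unfolding treeF_def Let_def
    by (cases "(\<lfloor>snd w\<rfloor> - t) div 4 \<le> n") (simp_all add: G_upd)
qed

lemma rf_upd: "rf (f(n := v)) = (rf f)(- n := v)"
  unfolding rf_def by (auto simp: fun_eq_iff)

lemma fin_fsup_diff4:
  assumes "finite (fsup a)" "finite (fsup b)" "finite (fsup c)" "finite (fsup d)" "1 \<le> p"
  shows "pn p (\<lambda>w. a w + b w + c w + d w) \<le> pn p a + pn p b + pn p c + pn p d"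
proof -
  note that = assms(5)
  have "pn p (\<lambda>w. a w + b w + c w + d w) \<le> pn p (\<lambda>w. a w + b w + c w) + pn p d"
    using pn_triangle[of "\<lambda>w. a w + b w + c w" d p] assms that fin_fsup_add by auto
  also have "pn p (\<lambda>w. a w + b w + c w) \<le> pn p (\<lambda>w. a w + b w) + pn p c"
    using pn_triangle[of "\<lambda>w. a w + b w" c p] assms that fin_fsup_add by auto
  also have "pn p (\<lambda>w. a w + b w) \<le> pn p a + pn p b"
    using pn_triangle[of a b p] assms that by auto
  finally show ?thesis by simp
qed

lemma theta_decomp:
  "(\<lambda>w. theta p (f, n) w - theta p (f', n') w) =
   (\<lambda>w. (curF n w - curF n' w) + (lampF f w - lampF f' w) + (treeF p 2 f n w - treeF p 2 f' n' w)
      + (treeF p 3 (rf f) (- n) w - treeF p 3 (rf f') (- n') w))"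
  unfolding theta_def by (auto simp: fun_eq_iff)

definition L0 :: "real \<Rightarrow> real" where "L0 p = 1 + 2 * Ct p"

lemma Ct_nonneg: "Ct p \<ge> 0" unfolding Ct_def by simp

lemma gen_step:
  assumes "(f, n) \<in> lamp_carrier" "s \<in> lamp_gens" "1 \<le> p"
  shows "pn p (\<lambda>w. theta p (f, n) w - theta p (lamp_mult (f, n) s) w) \<le> L0 p"
proof -
  have f: "fin f" using assms carrier_iff by simp
  have p0: "p > 0" using assms by simp
  have fin_gen: "fin f'" if "lamp_mult (f, n) s = (f', n')" for f' n'
    using carrier_step[OF assms(1,2)] that carrier_iff by simp
  obtain f' n' where y: "lamp_mult (f, n) s = (f', n')" by (cases "lamp_mult (f, n) s")
  have f': "fin f'" using fin_gen[OF y] .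
  define a where "a w = curF n w - curF n' w" for w
  define b where "b w = lampF f w - lampF f' w" for w
  define c where "c w = treeF p 2 f n w - treeF p 2 f' n' w" for w
  define d where "d w = treeF p 3 (rf f) (- n) w - treeF p 3 (rf f') (- n') w" for w
  have fins: "finite (fsup a)" "finite (fsup b)" "finite (fsup c)" "finite (fsup d)"
    unfolding a_def b_def c_def d_def
    using fin_fsup_diff fin_fsup_curF fin_fsup_lampF f f' apply auto[2]
    using fin_fsup_diff[OF fin_fsup_treeF[OF f] fin_fsup_treeF[OF f']] apply simp
    using fin_fsup_diff[OF fin_fsup_treeF[OF fin_rf[OF f]] fin_fsup_treeF[OF fin_rf[OF f']]] by simp
  have "pn p (\<lambda>w. theta p (f, n) w - theta p (f', n') w) = pn p (\<lambda>w. a w + b w + c w + d w)"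
    unfolding theta_decomp a_def b_def c_def d_def ..
  also have "\<dots> \<le> pn p a + pn p b + pn p c + pn p d" by (rule fin_fsup_diff4[OF fins assms(3)])
  also have "pn p a + pn p b + pn p c + pn p d \<le> L0 p"
    using assms(2)
  proof (cases rule: gens_cases)
    case 1
    hence e: "f' = f(n := f n + 1)" "n' = n" using y mult_up by auto
    have "a = (\<lambda>w. 0)" unfolding a_def e by simp
    moreover have "c = (\<lambda>w. 0)" unfolding c_def e using treeF_upd[of p 2 f n "f n + 1"] by simp
    moreover have "d = (\<lambda>w. 0)" unfolding d_def e rf_upd using treeF_upd[of p 3 "rf f" "- n" "f n + 1"] by simp
    moreover have "pn p b \<le> 1"
    proof -
      have "fsup b \<subseteq> {(0, real_of_int (4 * n + 1))}"
      proof
        fix w assume "w \<in> fsup b"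
        hence "lampF f w \<noteq> 0 \<or> lampF f' w \<noteq> 0" unfolding fsup_def b_def by auto
        then obtain j where w: "w = (0, real_of_int (4 * j + 1))" using lampF_nz by blast
        have "b w = real_of_int (f j) - real_of_int (f' j)"
          unfolding b_def using theta_lamp[of p f 0 j] theta_lamp[of p f' 0 j]
          unfolding w lampF_def Let_def using decode[of 1 j] by simp
        hence "j = n" using \<open>w \<in> fsup b\<close> unfolding fsup_def e by (cases "j = n") auto
        thus "w \<in> {(0, real_of_int (4 * n + 1))}" using w by simp
      qed
      hence "pn p b = \<bar>b (0, real_of_int (4 * n + 1))\<bar>" by (rule pn_single[OF _ p0])
      also have "\<dots> = 1" unfolding b_def e lampF_def Let_def using decode[of 1 n] by simp
      finally show ?thesis by simp
    qed
    ultimately show ?thesis unfolding L0_def using Ct_nonneg[of p] by (simp add: pn_zero)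
  next
    case 2
    hence e: "f' = f(n := f n - 1)" "n' = n" using y mult_down by auto
    have "a = (\<lambda>w. 0)" unfolding a_def e by simp
    moreover have "c = (\<lambda>w. 0)" unfolding c_def e using treeF_upd[of p 2 f n "f n - 1"] by simp
    moreover have "d = (\<lambda>w. 0)" unfolding d_def e rf_upd using treeF_upd[of p 3 "rf f" "- n" "f n - 1"] by simp
    moreover have "pn p b \<le> 1"
    proof -
      have "fsup b \<subseteq> {(0, real_of_int (4 * n + 1))}"
      proof
        fix w assume "w \<in> fsup b"
        hence "lampF f w \<noteq> 0 \<or> lampF f' w \<noteq> 0" unfolding fsup_def b_def by auto
        then obtain j where w: "w = (0, real_of_int (4 * j + 1))" using lampF_nz by blast
        have "b w = real_of_int (f j) - real_of_int (f' j)"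
          unfolding b_def unfolding w lampF_def Let_def using decode[of 1 j] by simp
        hence "j = n" using \<open>w \<in> fsup b\<close> unfolding fsup_def e by (cases "j = n") auto
        thus "w \<in> {(0, real_of_int (4 * n + 1))}" using w by simp
      qed
      hence "pn p b = \<bar>b (0, real_of_int (4 * n + 1))\<bar>" by (rule pn_single[OF _ p0])
      also have "\<dots> = 1" unfolding b_def e lampF_def Let_def using decode[of 1 n] by simp
      finally show ?thesis by simp
    qed
    ultimately show ?thesis unfolding L0_def using Ct_nonneg[of p] by (simp add: pn_zero)
  next
    case 3
    hence e: "f' = f" "n' = n + 1" using y mult_right by auto
    have "b = (\<lambda>w. 0)" unfolding b_def e by simp
    moreover have "pn p a \<le> 1"
    proof -
      have "fsup a \<subseteq> {(0, 0)}" unfolding fsup_def a_def curF_def by auto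
      hence "pn p a = \<bar>a (0, 0)\<bar>" by (rule pn_single[OF _ p0])
      thus ?thesis unfolding a_def curF_def e by simp
    qed
    moreover have "pn p c \<le> Ct p" unfolding c_def e by (rule tree_step(1)[OF f assms(3)]) auto
    moreover have "pn p d \<le> Ct p"
    proof -
      have T: "pn p (\<lambda>w. treeF p 3 (rf f) ((- n - 1) + 1) w - treeF p 3 (rf f) (- n - 1) w) \<le> Ct p"
        by (rule tree_step(2)[OF fin_rf[OF f] assms(3)]) auto
      have e1: "(- n - 1) + 1 = - n" by simp
      have e2: "- (n + 1) = - n - 1" by simp
      show ?thesis using T unfolding d_def e e1 e2 .
    qed
    ultimately show ?thesis unfolding L0_def by (simp add: pn_zero)
  next
    case 4
    hence e: "f' = f" "n' = n - 1" using y mult_left by auto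
    have "b = (\<lambda>w. 0)" unfolding b_def e by simp
    moreover have "pn p a \<le> 1"
    proof -
      have "fsup a \<subseteq> {(0, 0)}" unfolding fsup_def a_def curF_def by auto
      hence "pn p a = \<bar>a (0, 0)\<bar>" by (rule pn_single[OF _ p0])
      thus ?thesis unfolding a_def curF_def e by simp
    qed
    moreover have "pn p c \<le> Ct p"
    proof -
      have "pn p c = pn p (\<lambda>w. treeF p 2 f ((n - 1) + 1) w - treeF p 2 f (n - 1) w)"
        unfolding c_def e by simp
      also have "\<dots> \<le> Ct p" by (rule tree_step(2)[OF f assms(3)]) auto
      finally show ?thesis .
    qed
    moreover have "pn p d \<le> Ct p"
    proof -
      have "pn p d = pn p (\<lambda>w. treeF p 3 (rf f) (- n) w - treeF p 3 (rf f) (- n + 1) w)"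
        unfolding d_def e by (simp add: algebra_simps)
      also have "\<dots> \<le> Ct p" by (rule tree_step(1)[OF fin_rf[OF f] assms(3)]) auto
      finally show ?thesis .
    qed
    ultimately show ?thesis unfolding L0_def by (simp add: pn_zero)
  qed
  finally show ?thesis using y by simp
qed

lemma fin_theta: "x \<in> lamp_carrier \<Longrightarrow> finite (fsup (theta p x))"
  by (cases x) (simp add: carrier_iff fin_fsup_theta)

lemma lipschitz_path:
  assumes "lamp_path x k y" "x \<in> lamp_carrier" "1 \<le> p"
  shows "pn p (\<lambda>w. theta p x w - theta p y w) \<le> L0 p * real k"
  using assms
proof (induction rule: lamp_path.induct)
  case (refl x)
  then show ?case by (simp add: pn_zero)
next
  case (step x k y s)
  have yc: "y \<in> lamp_carrier" using carrier_path[OF step(1,4)] .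
  have yc': "lamp_mult y s \<in> lamp_carrier" using carrier_step[OF yc step(2)] .
  obtain f n where y: "y = (f, n)" by (cases y)
  have "pn p (\<lambda>w. theta p x w - theta p (lamp_mult y s) w)
      \<le> pn p (\<lambda>w. theta p x w - theta p y w) + pn p (\<lambda>w. theta p y w - theta p (lamp_mult y s) w)"
    by (rule pn_triangle_diff) (use fin_theta step yc yc' in auto)
  also have "\<dots> \<le> L0 p * real k + L0 p"
    using step.IH[OF step(4,5)] gen_step[of f n s p] yc step(2,5) y by (intro add_mono) auto
  finally show ?case by (simp add: algebra_simps)
qed

definition c1 :: "real \<Rightarrow> real" where "c1 p = (min 1 (3 / (2 * p))) powr (1 / p)"

lemma c1_pos: "1 \<le> p \<Longrightarrow> c1 p > 0"
proof -
  assume "1 \<le> p"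
  hence "0 < 3 / (2 * p)" by simp
  hence "0 < min 1 (3 / (2 * p))" by simp
  hence m: "min 1 (3 / (2 * p)) \<noteq> 0" by linarith
  show ?thesis unfolding c1_def using m by simp
qed

lemma tree_lower_gen:
  fixes u :: "nat \<times> real \<Rightarrow> real"
  assumes "finite (fsup u)" "1 \<le> p" "s < n"
    and hyp: "\<And>k. s < k \<Longrightarrow> k \<le> n \<Longrightarrow> \<bar>u (idx t k (F k))\<bar> = phi p (n - k)"
  shows "c1 p * real_of_int (n - s) powr (2/3) \<le> pn p u"
proof -
  define a where "a = nat (n - s)"
  have p0: "p > 0" using assms by simp
  define \<iota> where "\<iota> j = idx t (n - int j) (F (n - int j))" for j :: nat
  have inj: "inj_on \<iota> {..<a}" unfolding inj_on_def \<iota>_def idx_def by auto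
  have val: "\<bar>u (\<iota> j)\<bar> powr p = (real j + 1) powr (2 * p / 3 - 1)" if "j < a" for j
  proof -
    have "\<bar>u (\<iota> j)\<bar> = phi p (int j)" unfolding \<iota>_def using hyp[of "n - int j"] that a_def by simp
    also have "\<dots> = (real j + 1) powr (2/3 - 1/p)" unfolding phi_def by simp
    finally have "\<bar>u (\<iota> j)\<bar> powr p = ((real j + 1) powr (2/3 - 1/p)) powr p" by simp
    also have "\<dots> = (real j + 1) powr ((2/3 - 1/p) * p)" by (simp add: powr_powr)
    also have "(2/3 - 1/p) * p = 2 * p / 3 - 1" using p0 by (simp add: field_simps)
    finally show ?thesis .
  qed
  have "(\<Sum>w\<in>\<iota> ` {..<a}. \<bar>u w\<bar> powr p) = (\<Sum>j<a. (real j + 1) powr (2 * p / 3 - 1))"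
    by (subst sum.reindex[OF inj]) (simp add: val)
  moreover have "min 1 (3 / (2 * p)) * real a powr (2 * p / 3) \<le> (\<Sum>j<a. (real j + 1) powr (2 * p / 3 - 1))"
    by (rule lower_sum[OF assms(2)])
  ultimately have L: "min 1 (3 / (2 * p)) * real a powr (2 * p / 3) \<le> (\<Sum>w\<in>\<iota> ` {..<a}. \<bar>u w\<bar> powr p)" by simp
  have "(min 1 (3 / (2 * p)) * real a powr (2 * p / 3)) powr (1/p) \<le> (\<Sum>w\<in>\<iota> ` {..<a}. \<bar>u w\<bar> powr p) powr (1/p)"
    by (rule powr_mono2) (use L p0 in auto)
  also have "\<dots> \<le> pn p u" by (rule pn_ge_sum[OF assms(1) _ p0]) simp
  also have "(min 1 (3 / (2 * p)) * real a powr (2 * p / 3)) powr (1/p) = c1 p * real a powr (2/3)"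
    unfolding c1_def using p0 by (simp add: powr_mult powr_powr)
  also have "real a = real_of_int (n - s)" unfolding a_def using assms by simp
  finally show ?thesis .
qed

lemma G_mem: "f s \<noteq> 0 \<Longrightarrow> s < k \<Longrightarrow> (s, f s) \<in> G f k"
  unfolding G_def by auto

lemma G_diff: "f s \<noteq> g s \<Longrightarrow> f s \<noteq> 0 \<Longrightarrow> s < k \<Longrightarrow> G f k \<noteq> G g k"
  using G_mem[of f s k] unfolding G_def by auto

lemma tree_lower_L:
  assumes "fin f" "fin g" "f s \<noteq> g s" "f s \<noteq> 0" "s < n" "1 \<le> p"
  shows "c1 p * real_of_int (n - s) powr (2/3) \<le> pn p (\<lambda>w. theta p (f, n) w - theta p (g, m) w)"
proof (rule tree_lower_gen[where t = 2 and F = "G f"])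
  show "finite (fsup (\<lambda>w. theta p (f, n) w - theta p (g, m) w))"
    using fin_fsup_diff fin_fsup_theta assms by blast
  fix k assume k: "s < k" "k \<le> n"
  have ne: "G f k \<noteq> {}" using G_mem[of f s k, OF assms(4) k(1)] by auto
  have "theta p (f, n) (idx 2 k (G f k)) = phi p (n - k)"
    using theta_idx2[OF G_FS[OF assms(1)] assms(1)] k ne by simp
  moreover have "theta p (g, m) (idx 2 k (G f k)) = 0"
    using theta_idx2[OF G_FS[OF assms(1)] assms(2)] G_diff[of f s g k, OF assms(3,4) k(1)] by simp
  moreover have "phi p (n - k) \<ge> 0" unfolding phi_def by simp
  ultimately show "\<bar>theta p (f, n) (idx 2 k (G f k)) - theta p (g, m) (idx 2 k (G f k))\<bar> = phi p (n - k)"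
    by simp
qed (use assms in auto)

lemma rf_apply: "rf f (- s) = f s" unfolding rf_def by simp

lemma tree_lower_R:
  assumes "fin f" "fin g" "f s \<noteq> g s" "f s \<noteq> 0" "n < s" "1 \<le> p"
  shows "c1 p * real_of_int (s - n) powr (2/3) \<le> pn p (\<lambda>w. theta p (f, n) w - theta p (g, m) w)"
proof -
  have f': "fin (rf f)" "fin (rf g)" using fin_rf assms by auto
  have a: "rf f (- s) \<noteq> rf g (- s)" "rf f (- s) \<noteq> 0" using assms by (simp_all add: rf_apply)
  have "c1 p * real_of_int (- n - - s) powr (2/3) \<le> pn p (\<lambda>w. theta p (f, n) w - theta p (g, m) w)"
  proof (rule tree_lower_gen[where t = 3 and F = "G (rf f)"])
    show "finite (fsup (\<lambda>w. theta p (f, n) w - theta p (g, m) w))"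
      using fin_fsup_diff fin_fsup_theta assms by blast
    fix k assume k: "- s < k" "k \<le> - n"
    have ne: "G (rf f) k \<noteq> {}" using G_mem[of "rf f" "- s" k, OF a(2) k(1)] by auto
    have "theta p (f, n) (idx 3 k (G (rf f) k)) = phi p (- n - k)"
      using theta_idx3[OF G_FS[OF f'(1)] assms(1)] k ne by simp
    moreover have "theta p (g, m) (idx 3 k (G (rf f) k)) = 0"
      using theta_idx3[OF G_FS[OF f'(1)] assms(2)] G_diff[of "rf f" "- s" "rf g" k, OF a k(1)] by simp
    moreover have "phi p (- n - k) \<ge> 0" unfolding phi_def by simp
    ultimately show "\<bar>theta p (f, n) (idx 3 k (G (rf f) k)) - theta p (g, m) (idx 3 k (G (rf f) k))\<bar> = phi p (- n - k)"
      by simp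
  qed (use assms in auto)
  thus ?thesis by simp
qed

lemma point_lower:
  assumes "fin f" "fin g" "1 \<le> p"
  shows "\<bar>real_of_int (n - m)\<bar> \<le> pn p (\<lambda>w. theta p (f, n) w - theta p (g, m) w)"
    "\<bar>real_of_int (f j - g j)\<bar> \<le> pn p (\<lambda>w. theta p (f, n) w - theta p (g, m) w)"
proof -
  have fin: "finite (fsup (\<lambda>w. theta p (f, n) w - theta p (g, m) w))"
    using fin_fsup_diff fin_fsup_theta assms by blast
  show "\<bar>real_of_int (n - m)\<bar> \<le> pn p (\<lambda>w. theta p (f, n) w - theta p (g, m) w)"
    using pn_ge_point[OF fin, where w = "(0,0)" and p = p] assms unfolding theta_cur by simp
  show "\<bar>real_of_int (f j - g j)\<bar> \<le> pn p (\<lambda>w. theta p (f, n) w - theta p (g, m) w)"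
    using pn_ge_point[OF fin, where w = "(0, real_of_int (4 * j + 1))" and p = p] assms unfolding theta_lamp by simp
qed

lemma key:
  assumes xc: "(f, n) \<in> lamp_carrier" and yc: "(g, m) \<in> lamp_carrier" and p: "1 \<le> p"
    and N_def: "N = pn p (\<lambda>w. theta p (f, n) w - theta p (g, m) w)"
    and c2_def: "c2 = min 1 (c1 p)"
    and R_def: "R = max 1 (N / c2)"
  shows "real (lamp_dist (f, n) (g, m)) \<le> 21 * R powr (5/2)"
proof -
  have ff: "fin f" "fin g" using xc yc carrier_iff by auto
  have c2: "0 < c2" "c2 \<le> 1" unfolding c2_def using c1_pos[OF p] by auto
  have N0: "0 \<le> N" unfolding N_def by (rule pn_nonneg)
  have R1: "1 \<le> R" unfolding R_def by simp
  have NR: "N \<le> R"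
  proof -
    have "N \<le> N / c2" using c2 N0 by (simp add: le_divide_eq mult_left_le_one_le mult_right_le_one_le)
    thus ?thesis unfolding R_def by simp
  qed
  have RX: "R \<le> R powr (3/2)" using powr_mono[of 1 "3/2" R] R1 by simp
  have X5: "R powr (3/2) \<le> R powr (5/2)" using powr_mono[of "3/2" "5/2" R] R1 by simp
  have R5: "R \<le> R powr (5/2)" using RX X5 by simp
  have XR: "R powr (3/2) * R = R powr (5/2)"
  proof -
    have "R powr (5/2) = R powr (3/2 + 1)" by simp
    also have "\<dots> = R powr (3/2) * R powr 1" by (rule powr_add)
    also have "R powr 1 = R" using R1 by simp
    finally show ?thesis by simp
  qed
  have Xb: "X \<le> R powr (3/2)" if X0: "0 \<le> X" and hX: "c1 p * X powr (2/3) \<le> N" for X :: real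
  proof -
    have "c2 * X powr (2/3) \<le> c1 p * X powr (2/3)"
      unfolding c2_def by (rule mult_right_mono) auto
    hence "c2 * X powr (2/3) \<le> N" using hX by simp
    hence "X powr (2/3) \<le> N / c2" using c2 by (simp add: field_simps)
    hence "X powr (2/3) \<le> R" unfolding R_def by simp
    hence "(X powr (2/3)) powr (3/2) \<le> R powr (3/2)"
      by (rule powr_mono2[rotated 2]) auto
    thus ?thesis using X0 by (simp add: powr_powr)
  qed
  have nm: "\<bar>real_of_int (n - m)\<bar> \<le> N" unfolding N_def by (rule point_lower(1)[OF ff p])
  have lampb: "\<bar>real_of_int (f j - g j)\<bar> \<le> N" for j unfolding N_def by (rule point_lower(2)[OF ff p])
  have symN: "N = pn p (\<lambda>w. theta p (g, m) w - theta p (f, n) w)" unfolding N_def by (rule pn_sym)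
  show ?thesis
  proof (cases "f = g")
    case True
    have "lamp_path (f, n) (nat \<bar>m - n\<bar>) (g, m)" using path_move[of f n m] True by simp
    hence "lamp_dist (f, n) (g, m) \<le> nat \<bar>m - n\<bar>" by (rule dist_le)
    hence "real (lamp_dist (f, n) (g, m)) \<le> real (nat \<bar>m - n\<bar>)" by linarith
    also have "\<dots> = \<bar>real_of_int (n - m)\<bar>" by simp
    also have "\<dots> \<le> R" using nm NR by simp
    also have "\<dots> \<le> 21 * R powr (5/2)" using R5 R1 by simp
    finally show ?thesis .
  next
    case False
    define S where "S = {j. f j \<noteq> g j}"
    have finS: "finite S" unfolding S_def
      by (rule finite_subset[of _ "{j. f j \<noteq> 0} \<union> {j. g j \<noteq> 0}"]) (use ff in auto)
    have neS: "S \<noteq> {}" using False unfolding S_def by (auto simp: fun_eq_iff)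
    define s where "s = Min S"
    define t where "t = Max S"
    have sS: "s \<in> S" "t \<in> S" unfolding s_def t_def using finS neS by auto
    have st: "\<forall>j\<in>S. s \<le> j \<and> j \<le> t" unfolding s_def t_def using finS neS by auto
    define lo where "lo = min (min n m) s"
    define hi where "hi = max (max n m) t"
    have agree: "\<forall>j. j < lo \<or> hi < j \<longrightarrow> f j = g j"
    proof (intro allI impI)
      fix j assume "j < lo \<or> hi < j"
      hence "j \<notin> S" using st unfolding lo_def hi_def by force
      thus "f j = g j" unfolding S_def by simp
    qed
    have bnds: "lo \<le> n" "lo \<le> m" "n \<le> hi" "m \<le> hi" "lo \<le> hi" unfolding lo_def hi_def by auto
    have P: "lamp_path (f, n) (nat (n - lo) + (nat (hi - lo) + (\<Sum>j\<in>{lo..hi}. nat \<bar>g j - f j\<bar>)) + nat (hi - m)) (g, m)"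
      by (rule path_general[OF bnds(1-4) agree])
    have d1: "real (lamp_dist (f, n) (g, m)) \<le> real (nat (n - lo) + (nat (hi - lo) + (\<Sum>j\<in>{lo..hi}. nat \<bar>g j - f j\<bar>)) + nat (hi - m))"
      using dist_le[OF P] by linarith
    have sumb: "real (\<Sum>j\<in>{lo..hi}. nat \<bar>g j - f j\<bar>) \<le> real_of_int (hi - lo + 1) * N"
    proof -
      have "real (\<Sum>j\<in>{lo..hi}. nat \<bar>g j - f j\<bar>) = (\<Sum>j\<in>{lo..hi}. \<bar>real_of_int (f j - g j)\<bar>)"
        by (simp add: of_nat_sum abs_minus_commute)
      also have "\<dots> \<le> (\<Sum>j\<in>{lo..hi}. N)" by (rule sum_mono) (rule lampb)
      also have "\<dots> = real_of_int (hi - lo + 1) * N" using bnds by simp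
      finally show ?thesis .
    qed
    have left: "real_of_int (min n m - lo) \<le> R powr (3/2)"
    proof (cases "s < min n m")
      case False
      hence "min n m - lo = 0" unfolding lo_def by linarith
      thus ?thesis by simp
    next
      case True
      have mlo: "min n m - lo = min n m - s" unfolding lo_def using True by simp
      show ?thesis
      proof (cases "f s \<noteq> 0")
        case True
        have "c1 p * real_of_int (n - s) powr (2/3) \<le> N"
          unfolding N_def using tree_lower_L[OF ff _ True _ p] sS \<open>s < min n m\<close> unfolding S_def by simp
        hence "real_of_int (n - s) \<le> R powr (3/2)" by (intro Xb) (use \<open>s < min n m\<close> in auto)
        thus ?thesis unfolding mlo by simp
      next
        case False
        hence gs: "g s \<noteq> 0" using sS unfolding S_def by auto
        have "c1 p * real_of_int (m - s) powr (2/3) \<le> N"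
          unfolding symN using tree_lower_L[OF ff(2,1) _ gs _ p] sS \<open>s < min n m\<close> unfolding S_def by simp
        hence "real_of_int (m - s) \<le> R powr (3/2)" by (intro Xb) (use \<open>s < min n m\<close> in auto)
        thus ?thesis unfolding mlo by simp
      qed
    qed
    have right: "real_of_int (hi - max n m) \<le> R powr (3/2)"
    proof (cases "max n m < t")
      case False
      hence "hi - max n m = 0" unfolding hi_def by linarith
      thus ?thesis by simp
    next
      case True
      have mhi: "hi - max n m = t - max n m" unfolding hi_def using True by simp
      show ?thesis
      proof (cases "f t \<noteq> 0")
        case True
        have "c1 p * real_of_int (t - n) powr (2/3) \<le> N"
          unfolding N_def using tree_lower_R[OF ff _ True _ p] sS \<open>max n m < t\<close> unfolding S_def by simp
        hence "real_of_int (t - n) \<le> R powr (3/2)" by (intro Xb) (use \<open>max n m < t\<close> in auto)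
        thus ?thesis unfolding mhi by simp
      next
        case False
        hence gt: "g t \<noteq> 0" using sS unfolding S_def by auto
        have "c1 p * real_of_int (t - m) powr (2/3) \<le> N"
          unfolding symN using tree_lower_R[OF ff(2,1) _ gt _ p] sS \<open>max n m < t\<close> unfolding S_def by simp
        hence "real_of_int (t - m) \<le> R powr (3/2)" by (intro Xb) (use \<open>max n m < t\<close> in auto)
        thus ?thesis unfolding mhi by simp
      qed
    qed
    define D where "D = real_of_int (hi - lo)"
    define X where "X = R powr (3/2)"
    have D: "D \<le> 3 * X" "0 \<le> D"
    proof -
      have "real_of_int (hi - lo) = real_of_int (hi - max n m) + \<bar>real_of_int (n - m)\<bar> + real_of_int (min n m - lo)"
        by simp
      thus "D \<le> 3 * X" unfolding D_def X_def using left right nm NR RX by linarith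
      show "0 \<le> D" unfolding D_def using bnds by simp
    qed
    have "real (lamp_dist (f, n) (g, m)) \<le> real_of_int (n - lo) + (real_of_int (hi - lo) + real_of_int (hi - lo + 1) * N) + real_of_int (hi - m)"
      using d1 sumb bnds by simp
    also have "\<dots> \<le> 3 * D + (D + 1) * N" unfolding D_def using bnds by simp
    also have "\<dots> \<le> 9 * X + (3 * X + 1) * R"
    proof -
      have "(D + 1) * N \<le> (3 * X + 1) * R" by (rule mult_mono) (use D NR N0 in auto)
      thus ?thesis using D by simp
    qed
    also have "\<dots> = 9 * X + 3 * R powr (5/2) + R" unfolding X_def using XR by (simp add: algebra_simps)
    also have "\<dots> \<le> 21 * R powr (5/2)" using X5 R5 powr_ge_zero[of R "5/2"] unfolding X_def by linarith
    finally show ?thesis .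
  qed
qed

theorem corollary4p2p8:
  fixes p :: real and \<alpha> :: real
  assumes "1 \<le> p" and "\<alpha> < 1 / 3"
  shows "\<exists>(M :: (nat \<times> real) measure) (\<theta> :: lamp \<Rightarrow> nat \<times> real \<Rightarrow> real).
           (\<forall>x\<in>lamp_carrier. in_Lp M p (\<theta> x)) \<and>
           (\<exists>L. \<forall>x\<in>lamp_carrier. \<forall>y\<in>lamp_carrier.
                 Lp_norm M p (\<lambda>\<omega>. \<theta> x \<omega> - \<theta> y \<omega>) \<le> L * real (lamp_dist x y)) \<and>
           (\<exists>c > 0. \<exists>t0 :: real. \<forall>x\<in>lamp_carrier. \<forall>y\<in>lamp_carrier.
                 t0 \<le> real (lamp_dist x y) \<longrightarrow>
                 c * real (lamp_dist x y) powr \<alpha> \<le> Lp_norm M p (\<lambda>\<omega>. \<theta> x \<omega> - \<theta> y \<omega>))"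
proof (intro exI conjI)
  have p0: "p > 0" using assms by simp
  have LpN: "Lp_norm (count_space UNIV) p (\<lambda>w. theta p x w - theta p y w) = pn p (\<lambda>w. theta p x w - theta p y w)"
    if "x \<in> lamp_carrier" "y \<in> lamp_carrier" for x y
    by (rule pn_Lp[OF fin_fsup_diff[OF fin_theta[OF that(1)] fin_theta[OF that(2)]] p0])
  show "\<forall>x\<in>lamp_carrier. in_Lp (count_space UNIV) p (theta p x)"
    using in_Lp_fin fin_theta by blast
  show "\<forall>x\<in>lamp_carrier. \<forall>y\<in>lamp_carrier.
      Lp_norm (count_space UNIV) p (\<lambda>w. theta p x w - theta p y w) \<le> L0 p * real (lamp_dist x y)"
  proof (intro ballI)
    fix x y assume xy: "x \<in> lamp_carrier" "y \<in> lamp_carrier"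
    obtain f n g m where e: "x = (f, n)" "y = (g, m)" by (cases x, cases y)
    obtain k where "lamp_path x k y" using connected xy e by blast
    hence "lamp_path x (lamp_dist x y) y" by (rule dist_path)
    from lipschitz_path[OF this xy(1) assms(1)] show "Lp_norm (count_space UNIV) p (\<lambda>w. theta p x w - theta p y w) \<le> L0 p * real (lamp_dist x y)"
      using LpN[OF xy] by simp
  qed
  define c2 where "c2 = min 1 (c1 p)"
  have c2: "0 < c2" "c2 \<le> 1" unfolding c2_def using c1_pos[OF assms(1)] by auto
  show "c2 * 21 powr (- 2 / 5) > 0" using c2 by simp
  show "\<forall>x\<in>lamp_carrier. \<forall>y\<in>lamp_carrier. 22 \<le> real (lamp_dist x y) \<longrightarrow>
      c2 * 21 powr (- 2 / 5) * real (lamp_dist x y) powr \<alpha>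
        \<le> Lp_norm (count_space UNIV) p (\<lambda>w. theta p x w - theta p y w)"
  proof (intro ballI impI)
    fix x y assume xy: "x \<in> lamp_carrier" "y \<in> lamp_carrier" and d22: "22 \<le> real (lamp_dist x y)"
    obtain f n g m where e: "x = (f, n)" "y = (g, m)" by (cases x, cases y)
    define N where "N = pn p (\<lambda>w. theta p x w - theta p y w)"
    define R where "R = max 1 (N / c2)"
    define d where "d = real (lamp_dist x y)"
    have K: "d \<le> 21 * R powr (5/2)"
      using key[of f n g m p N c2 R] xy e assms(1) unfolding N_def R_def c2_def d_def by simp
    have R1: "R > 1"
    proof (rule ccontr)
      assume "\<not> R > 1"
      hence "R = 1" unfolding R_def by simp
      thus False using K d22 unfolding d_def by simp
    qed
    hence RN: "R = N / c2" unfolding R_def by simp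
    have d0: "d > 0" using d22 unfolding d_def by simp
    have "(d / 21) powr (2/5) \<le> (R powr (5/2)) powr (2/5)"
      by (rule powr_mono2) (use K d0 in auto)
    also have "\<dots> = R" using R1 by (simp add: powr_powr)
    finally have A: "(d / 21) powr (2/5) \<le> N / c2" using RN by simp
    have B1: "(d / 21) powr (2/5) = d powr (2/5) / 21 powr (2/5)"
      using d0 by (simp add: powr_divide)
    have m25: "(- 2 / 5 :: real) = - (2/5)" by simp
    have B2: "21 powr (- 2 / 5) = 1 / (21::real) powr (2/5)"
      unfolding m25 by (rule powr_minus_divide)
    have B: "(d / 21) powr (2/5) = 21 powr (- 2 / 5) * d powr (2/5)"
      unfolding B1 B2 by simp
    have C: "d powr \<alpha> \<le> d powr (2/5)"
      by (rule powr_mono) (use assms(2) d22 in \<open>auto simp: d_def\<close>)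
    have "c2 * 21 powr (- 2 / 5) * d powr \<alpha> \<le> c2 * 21 powr (- 2 / 5) * d powr (2/5)"
      by (rule mult_left_mono[OF C]) (use c2 in simp)
    also have "\<dots> = c2 * (d / 21) powr (2/5)" using B by simp
    also have "\<dots> \<le> c2 * (N / c2)" by (rule mult_left_mono[OF A]) (use c2 in simp)
    also have "\<dots> = N" using c2 by simp
    finally show "c2 * 21 powr (- 2 / 5) * real (lamp_dist x y) powr \<alpha>
        \<le> Lp_norm (count_space UNIV) p (\<lambda>w. theta p x w - theta p y w)"
      unfolding LpN[OF xy] N_def d_def .
  qed
qed

end
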